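(* Let $\lambda>0$, $A>0$, $B>0$, and for integers $N\ge0$ and $z\in\mathbb{C}$ with $\Re(z)>B$ let $$R_{fact}(\lambda,A,B,N,z)=\frac{A}{(\lambda B)^{\lambda B}}\,\frac{(N+\lambda B+1)^{N+\lambda B+1}}{(N+1)^N}\left|\frac{\Gamma(\lambda z)\Gamma(N+1)}{\Gamma(\lambda z+N+1)(\Re(z)-B)}\right|.$$ Then for fixed $z$ with $\Re(z)>B$, as $N\to+\infty$, $$R_{fact}(\lambda,A,B,N,z)\sim\frac{A\,e^{\lambda B(1-\ln(\lambda B))}}{N^{\lambda(\Re(z)-B)-1}}\,\frac{|\Gamma(\lambda z)|}{\Re(z)-B}.$$ *)

theory Defs
  imports "HOL-Analysis.Analysis" "HOL-Library.Landau_Symbols"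
begin

definition R_fact :: "real \<Rightarrow> real \<Rightarrow> real \<Rightarrow> nat \<Rightarrow> complex \<Rightarrow> real" where
  "R_fact lam A B N z =
     A / ((lam * B) powr (lam * B))
     * ((real N + lam * B + 1) powr (real N + lam * B + 1) / (real N + 1) ^ N)
     * cmod (Gamma (complex_of_real lam * z) * Gamma (of_nat N + 1)
             / (Gamma (complex_of_real lam * z + of_nat N + 1) * complex_of_real (Re z - B)))"

end

theory Submission imports Defs "HOL-Real_Asymp.Real_Asymp" begin

lemma aux_lim: "c > (0::real) \<Longrightarrow> ((\<lambda>x::real. (x + c + 1) powr (x + c + 1) / ((x+1) powr x * x powr (c+1))) \<longlongrightarrow> exp c) at_top"
  apply real_asymp
  apply (simp add: exp_minus)
  done

theorem lemma3p3:
  fixes lam A B :: real and z :: complex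
  assumes "lam > 0" and "A > 0" and "B > 0" and "Re z > B"
  shows "(%N. R_fact lam A B N z) \<sim>[at_top]
    (%N. A * exp (lam * B * (1 - ln (lam * B))) / (real N powr (lam * (Re z - B) - 1))
          * (cmod (Gamma (complex_of_real lam * z)) / (Re z - B)))"
proof -
  define c where "c = lam * B"
  define s where "s = Re z - B"
  define w where "w = complex_of_real lam * z"
  define g where "g = (\<lambda>x::real. (x + c + 1) powr (x + c + 1) / ((x+1) powr x * x powr (c+1)))"
  have c: "c > 0" using assms by (simp add: c_def)
  have s: "s > 0" using assms by (simp add: s_def)
  have Rew: "Re w = lam * Re z" by (simp add: w_def)
  have Rew2: "Re w = (lam * s - 1) + (c + 1)" by (simp add: Rew s_def c_def algebra_simps)
  have wpos: "Re w > 0" using assms Rew by (smt (verit) mult_pos_pos)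
  have wnp: "w \<notin> \<int>\<^sub>\<le>\<^sub>0" using wpos
    by (auto elim!: nonpos_Ints_cases simp: complex_nonpos_Reals_iff)
  have Gw: "Gamma w \<noteq> 0" using wnp by (rule Gamma_nonzero)
  have lim1: "(\<lambda>N. g (real N)) \<longlonglongrightarrow> exp c"
    using filterlim_compose[OF aux_lim[OF c] filterlim_real_sequentially] by (simp add: g_def)
  have lim2: "(\<lambda>N. cmod (Gamma_series w N)) \<longlonglongrightarrow> cmod (Gamma w)"
    by (intro tendsto_intros)
  have lim: "(\<lambda>N. g (real N) / exp c * (cmod (Gamma_series w N) / cmod (Gamma w))) \<longlonglongrightarrow> 1"
  proof -
    have "(\<lambda>N. g (real N) / exp c * (cmod (Gamma_series w N) / cmod (Gamma w))) \<longlonglongrightarrow> exp c / exp c * (cmod (Gamma w) / cmod (Gamma w))"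
      by (intro tendsto_intros lim1 lim2) (use Gw in auto)
    thus ?thesis using Gw by simp
  qed
  have eq: "R_fact lam A B N z / (A * exp (lam * B * (1 - ln (lam * B))) / (real N powr (lam * (Re z - B) - 1))
          * (cmod (Gamma (complex_of_real lam * z)) / (Re z - B)))
       = g (real N) / exp c * (cmod (Gamma_series w N) / cmod (Gamma w))" if N: "N \<ge> 1" for N
  proof -
    define x where "x = real N"
    have x: "x > 0" using N by (simp add: x_def)
    have G1: "Gamma (of_nat N + 1 :: complex) = fact N"
      using Gamma_fact[of N] by (simp add: add.commute)
    have G2: "Gamma (w + of_nat N + 1) = pochhammer w (N+1) * Gamma w"
      using pochhammer_Gamma[OF wnp, of "N+1"] Gw by (simp add: field_simps)
    have P: "pochhammer w (N+1) \<noteq> 0"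
      using wpos by (auto simp: pochhammer_eq_0_iff)
    have rat: "Gamma w * Gamma (of_nat N + 1) / Gamma (w + of_nat N + 1) = Gamma_series w N / exp (w * of_real (ln x))"
      unfolding G1 G2 Gamma_series_def x_def using Gw P by (simp add: field_simps)
    have cm: "cmod (exp (w * of_real (ln x))) = x powr (lam * Re z)"
      using x by (simp add: norm_exp_eq_Re Rew powr_def)
    have R: "R_fact lam A B N z = A / c powr c * ((x+c+1) powr (x+c+1) / (x+1) powr x) * (cmod (Gamma_series w N) / x powr (lam * Re z)) / s"
    proof -
      have "cmod (Gamma w * Gamma (of_nat N + 1) / (Gamma (w + of_nat N + 1) * complex_of_real s))
         = cmod (Gamma_series w N / exp (w * of_real (ln x))) / s"
      proof -
        have "Gamma w * Gamma (of_nat N + 1) / (Gamma (w + of_nat N + 1) * complex_of_real s)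
           = (Gamma w * Gamma (of_nat N + 1) / Gamma (w + of_nat N + 1)) / complex_of_real s"
          by (simp add: divide_divide_eq_left)
        also have "\<dots> = (Gamma_series w N / exp (w * of_real (ln x))) / complex_of_real s"
          by (simp only: rat)
        finally show ?thesis using s by (simp only: norm_divide norm_of_real)
      qed
      also have "\<dots> = cmod (Gamma_series w N) / x powr (lam * Re z) / s"
        by (simp only: norm_divide cm)
      finally have "cmod (Gamma w * Gamma (of_nat N + 1) / (Gamma (w + of_nat N + 1) * complex_of_real s))
          = cmod (Gamma_series w N) / x powr (lam * Re z) / s" .
      moreover have "(real N + 1) ^ N = (x+1) powr x" using x by (simp add: x_def powr_realpow)
      ultimately show ?thesis unfolding R_fact_def c_def[symmetric] w_def[symmetric] s_def[symmetric]
        by (simp add: x_def)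
    qed
    have E: "exp (lam * B * (1 - ln (lam * B))) = exp c / c powr c"
    proof -
      have "exp (lam * B * (1 - ln (lam * B))) = exp (c - c * ln c)"
        by (simp add: c_def algebra_simps)
      also have "\<dots> = exp c / c powr c" using c by (simp add: powr_def exp_diff)
      finally show ?thesis .
    qed
    have X: "x powr (lam * Re z) = x powr (lam * s - 1) * x powr (c + 1)"
      by (simp only: Rew[symmetric] Rew2 powr_add)
    have E2: "c powr c * exp (c - c * ln c) = exp c"
      using c by (simp add: powr_def exp_diff)
    show ?thesis
      unfolding R E c_def[symmetric] s_def[symmetric] w_def[symmetric] x_def[symmetric] X g_def
      using x c s Gw assms(2) E2 by (simp add: field_simps)
  qed
  show ?thesis
  proof (rule asymp_equivI')
    show "((\<lambda>N. R_fact lam A B N z / (A * exp (lam * B * (1 - ln (lam * B))) / (real N powr (lam * (Re z - B) - 1))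
          * (cmod (Gamma (complex_of_real lam * z)) / (Re z - B)))) \<longlongrightarrow> 1) at_top"
    proof (rule Lim_transform_eventually[OF lim])
      show "\<forall>\<^sub>F N in at_top. g (real N) / exp c * (cmod (Gamma_series w N) / cmod (Gamma w)) =
        R_fact lam A B N z / (A * exp (lam * B * (1 - ln (lam * B))) / (real N powr (lam * (Re z - B) - 1))
          * (cmod (Gamma (complex_of_real lam * z)) / (Re z - B)))"
        unfolding eventually_at_top_linorder using eq by (intro exI[of _ 1] allI impI) (rule sym, blast)
    qed
  qed
qed
end
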